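(* In the setting described in the context, if Method 1 stops at iteration $k$ (i.e. $x^{k+1}=x^k$), then $x^k\in\operatorname{zer}(A+B)$.
   Context: Let $\mathcal H$ be a real Hilbert space with inner product $\langle\cdot,\cdot\rangle$ and norm $\|\cdot\|$. Let $A_1:\mathcal H\to\mathcal H$ be $\beta$-cocoercive for some $\beta>0$ (i.e. $\langle A_1x-A_1y,x-y\rangle\ge\beta\|A_1x-A_1y\|^2$ for all $x,y$), let $A_2:\mathcal H\to\mathcal H$ be maximally monotone and uniformly continuous, let $B:\mathcal H\rightrightarrows\mathcal H$ be maximally monotone, and set $A:=A_1+A_2$. Assume $\operatorname{zer}(A+B):=\{x:0\in Ax+Bx\}\neq\emptyset$. $J_{\alpha B}:=(I+\alpha B)^{-1}$ for $\alpha>0$, and $P_C$ denotes the orthogonal projection onto a nonempty closed convex set $C$. Fix $\theta,\delta\in(0,1)$, $\bar\delta>0$ with $1-\delta-\bar\delta>0$, and $\alpha_{-1}>0$ with $\alpha_{-1}\le4\beta\bar\delta$. Conceptual Algorithm: pick $x^0\in\mathcal H$. Given $x^k$ and $\alpha_{k-1}$, for $j\in\mathbb N$ let $\bar x^k_j:=J_{\alpha_{k-1}\theta^jB}(x^k-\alpha_{k-1}\theta^jAx^k)$ and let $j(k)$ be the smallest $j\in\mathbb N$ with $\alpha_{k-1}\theta^j\langle A_2x^k-A_2\bar x^k_j,x^k-\bar x^k_j\rangle\le\delta\|x^k-\bar x^k_j\|^2$. Set $\alpha_k:=\alpha_{k-1}\theta^{j(k)}$, $\bar x^k:=J_{\alpha_kB}(x^k-\alpha_kAx^k)$,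 $r_k:=\frac{\bar\delta}{\alpha_k}\|x^k-\bar x^k\|^2$ and $T_k:=\{x\in\mathcal H:\langle \frac{x^k-\bar x^k}{\alpha_k}-(A_2x^k-A_2\bar x^k),x-\bar x^k\rangle\le r_k\}$. Method 1 sets $x^{k+1}:=P_{T_k}(x^k)$ and stops if $x^{k+1}=x^k$. *)

theory Defs
  imports "HOL-Analysis.Analysis"
begin

text \<open>Set-valued operators on a real Hilbert space are modelled as functions
  'a \<Rightarrow> 'a set; a single-valued operator F corresponds to (\<lambda>x. {F x}).\<close>

definition monotone_op :: "('a::real_inner \<Rightarrow> 'a set) \<Rightarrow> bool" where
  "monotone_op B \<longleftrightarrow> (\<forall>x y u v. u \<in> B x \<longrightarrow> v \<in> B y \<longrightarrow> inner (u - v) (x - y) \<ge> 0)"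

definition maximal_monotone :: "('a::real_inner \<Rightarrow> 'a set) \<Rightarrow> bool" where
  "maximal_monotone B \<longleftrightarrow> monotone_op B \<and>
     (\<forall>x u. (\<forall>y v. v \<in> B y \<longrightarrow> inner (u - v) (x - y) \<ge> 0) \<longrightarrow> u \<in> B x)"

definition cocoercive :: "real \<Rightarrow> ('a::real_inner \<Rightarrow> 'a) \<Rightarrow> bool" where
  "cocoercive \<beta> F \<longleftrightarrow> (\<forall>x y. inner (F x - F y) (x - y) \<ge> \<beta> * (norm (F x - F y))\<^sup>2)"

text \<open>Resolvent J_{\<alpha>B} = (I + \<alpha>B)^{-1}: J \<alpha> B z is the point x with z \<in> x + \<alpha> B x.\<close>
definition resolvent :: "real \<Rightarrow> ('a::real_inner \<Rightarrow> 'a set) \<Rightarrow> 'a \<Rightarrow> 'a" where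
  "resolvent \<alpha> B z = (THE x. z - x \<in> (\<lambda>v. \<alpha> *\<^sub>R v) ` B x)"

definition proj :: "'a::real_inner set \<Rightarrow> 'a \<Rightarrow> 'a" where
  "proj C x = (THE p. p \<in> C \<and> (\<forall>y\<in>C. dist x p \<le> dist x y))"

definition fb_point :: "('a::real_inner \<Rightarrow> 'a) \<Rightarrow> ('a \<Rightarrow> 'a) \<Rightarrow> ('a \<Rightarrow> 'a set) \<Rightarrow> real \<Rightarrow> 'a \<Rightarrow> 'a" where
  "fb_point A1 A2 B \<alpha> x = resolvent \<alpha> B (x - \<alpha> *\<^sub>R (A1 x + A2 x))"

text \<open>j(k): smallest j with the line search condition, given x = x^k and \<alpha> = \<alpha>_{k-1}.\<close>
definition ls_index :: "('a::real_inner \<Rightarrow> 'a) \<Rightarrow> ('a \<Rightarrow> 'a) \<Rightarrow> ('a \<Rightarrow> 'a set) \<Rightarrow> real \<Rightarrow> real \<Rightarrow> real \<Rightarrow> 'a \<Rightarrow> nat" where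
  "ls_index A1 A2 B \<theta> \<delta> \<alpha> x = (LEAST j::nat.
      (\<alpha> * \<theta> ^ j) * inner (A2 x - A2 (fb_point A1 A2 B (\<alpha> * \<theta> ^ j) x)) (x - fb_point A1 A2 B (\<alpha> * \<theta> ^ j) x)
        \<le> \<delta> * (norm (x - fb_point A1 A2 B (\<alpha> * \<theta> ^ j) x))\<^sup>2)"

text \<open>One iteration of Method 1: maps (x^k, \<alpha>_{k-1}) to (x^{k+1}, \<alpha>_k).\<close>
definition method1_step :: "('a::real_inner \<Rightarrow> 'a) \<Rightarrow> ('a \<Rightarrow> 'a) \<Rightarrow> ('a \<Rightarrow> 'a set) \<Rightarrow> real \<Rightarrow> real \<Rightarrow> real \<Rightarrow> 'a \<times> real \<Rightarrow> 'a \<times> real" where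
  "method1_step A1 A2 B \<theta> \<delta> \<delta>bar p =
     (let x = fst p; \<alpha>old = snd p;
          \<alpha> = \<alpha>old * \<theta> ^ ls_index A1 A2 B \<theta> \<delta> \<alpha>old x;
          xb = fb_point A1 A2 B \<alpha> x;
          r = (\<delta>bar / \<alpha>) * (norm (x - xb))\<^sup>2;
          T = {y. inner ((1 / \<alpha>) *\<^sub>R (x - xb) - (A2 x - A2 xb)) (y - xb) \<le> r}
      in (proj T x, \<alpha>))"

text \<open>The sequence of pairs (x^k, \<alpha>_{k-1}), starting from (x^0, \<alpha>_{-1}).\<close>
definition method1_iter :: "('a::real_inner \<Rightarrow> 'a) \<Rightarrow> ('a \<Rightarrow> 'a) \<Rightarrow> ('a \<Rightarrow> 'a set) \<Rightarrow> real \<Rightarrow> real \<Rightarrow> real \<Rightarrow> 'a \<Rightarrow> real \<Rightarrow> nat \<Rightarrow> 'a \<times> real" where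
  "method1_iter A1 A2 B \<theta> \<delta> \<delta>bar x0 \<alpha>m1 k = (method1_step A1 A2 B \<theta> \<delta> \<delta>bar ^^ k) (x0, \<alpha>m1)"

end

theory Submission
  imports Defs
begin
lemma small_t_lemma:
  fixes a b :: real
  assumes "\<And>t. 0 < t \<Longrightarrow> t \<le> 1 \<Longrightarrow> 0 \<le> a + t * b"
  shows "0 \<le> a"
proof (rule ccontr)
  assume "\<not> 0 \<le> a"
  hence a: "a < 0" by simp
  have b: "0 \<le> a + 1 * b" using assms[of 1] by simp
  hence bpos: "b > 0" using a by simp
  define t where "t = min 1 (-a / (2*b))"
  have "a / (2*b) < 0" using a bpos by (simp add: divide_neg_pos)
  hence t0: "0 < t" by (simp add: t_def)
  have t1: "t \<le> 1" by (simp add: t_def)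
  have "t \<le> -a/(2*b)" unfolding t_def by (rule min.cobounded2)
  hence "t * b \<le> (-a/(2*b)) * b" using bpos by (intro mult_right_mono) auto
  also have "\<dots> = -a/2" using bpos by simp
  finally have "a + t * b < 0" using a by simp
  thus False using assms[OF t0 t1] by simp
qed

lemma minty_core:
  fixes G :: "('a::{real_inner,complete_space} \<times> 'a) set"
  assumes mono: "\<And>x u y v. (x,u)\<in>G \<Longrightarrow> (y,v)\<in>G \<Longrightarrow> inner (x - y) (u - v) \<ge> 0"
  and maxi: "\<And>x u. (\<And>y v. (y,v)\<in>G \<Longrightarrow> inner (x - y) (u - v) \<ge> 0) \<Longrightarrow> (x,u) \<in> G"
  shows "\<exists>x. (x, -x) \<in> G"
proof -
  define tm where "tm yv p = inner (fst p) (snd yv) + inner (fst yv) (snd p) - inner (fst yv) (snd yv)"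
    for yv p :: "'a \<times> 'a"
  define Fle where "Fle p M \<longleftrightarrow> (\<forall>yv\<in>G. tm yv p \<le> M)" for p M
  define q where "q p = inner p p / 2" for p :: "'a\<times>'a"
  have lowb: "inner (fst p) (snd p) \<le> M" if F: "Fle p M" for p M
  proof (rule ccontr)
    assume n: "\<not> inner (fst p) (snd p) \<le> M"
    obtain x u where p: "p = (x,u)" by (cases p)
    have "(x,u) \<in> G"
    proof (rule maxi)
      fix y v assume yv: "(y,v) \<in> G"
      have "tm (y,v) p \<le> M" using F yv by (auto simp: Fle_def)
      thus "inner (x - y) (u - v) \<ge> 0" using n
        by (simp add: p tm_def inner_diff_left inner_diff_right)
    qed
    hence "tm (x,u) p \<le> M" using F by (auto simp: Fle_def)
    thus False using n by (simp add: p tm_def)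
  qed
  have graph: "Fle (y,v) (inner y v)" if "(y,v) \<in> G" for y v
    unfolding Fle_def
  proof
    fix yv assume "yv \<in> G"
    then obtain y' v' where yv: "yv = (y',v')" "(y',v') \<in> G" by (cases yv) auto
    have "inner (y - y') (v - v') \<ge> 0" using mono[OF that yv(2)] .
    thus "tm yv (y,v) \<le> inner y v"
      by (simp add: yv tm_def inner_diff_left inner_diff_right inner_commute)
  qed
  have conv: "Fle ((1-t) *\<^sub>R p + t *\<^sub>R p') ((1-t)*M + t*M')"
    if "Fle p M" "Fle p' M'" "0 \<le> t" "t \<le> 1" for p p' M M' t
    unfolding Fle_def
  proof
    fix yv assume yv: "yv \<in> G"
    have "tm yv ((1-t) *\<^sub>R p + t *\<^sub>R p') = (1-t) * tm yv p + t * tm yv p'"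
      by (simp add: tm_def inner_add_left inner_add_right algebra_simps)
    also have "\<dots> \<le> (1-t)*M + t*M'"
      using that yv unfolding Fle_def
      by (intro add_mono mult_left_mono) auto
    finally show "tm yv ((1-t) *\<^sub>R p + t *\<^sub>R p') \<le> (1-t)*M + t*M'" .
  qed
  have gnonneg: "0 \<le> M + q p" if "Fle p M" for p M
  proof -
    obtain a b where p: "p = (a,b)" by (cases p)
    have "inner (a + b) (a + b) \<ge> 0" by simp
    hence "0 \<le> 2 * inner a b + (inner a a + inner b b)"
      by (simp add: inner_add_left inner_add_right inner_commute)
    hence "0 \<le> inner a b + (inner a a + inner b b) / 2" by (simp add: field_simps)
    hence "0 \<le> inner (fst p) (snd p) + q p"
      by (simp add: p q_def)
    thus ?thesis using lowb[OF that] by simp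
  qed
  define S where "S = {M + q p | p M. Fle p M}"
  obtain y0 v0 where yv0: "(y0,v0) \<in> G"
  proof (cases "G = {}")
    case True
    have "((0::'a),(0::'a)) \<in> G" by (rule maxi) (simp add: True)
    thus ?thesis using that by blast
  next
    case False thus ?thesis using that by auto
  qed
  have Sne: "S \<noteq> {}" using graph[OF yv0] unfolding S_def by blast
  have Sbdd: "bdd_below S" unfolding S_def bdd_below_def using gnonneg by blast
  define m where "m = Inf S"
  have m_le: "m \<le> M + q p" if "Fle p M" for p M
  proof -
    have "M + q p \<in> S" unfolding S_def using that by blast
    thus ?thesis unfolding m_def by (rule cInf_lower[OF _ Sbdd])
  qed
  have "\<forall>n. \<exists>pM. Fle (fst pM) (snd pM) \<and> snd pM + q (fst pM) < m + 1 / real (Suc n)"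
  proof
    fix n
    have "Inf S < m + 1 / real (Suc n)" by (simp add: m_def)
    then obtain s where "s \<in> S" "s < m + 1 / real (Suc n)"
      using cInf_lessD[OF Sne] by blast
    thus "\<exists>pM. Fle (fst pM) (snd pM) \<and> snd pM + q (fst pM) < m + 1 / real (Suc n)"
      unfolding S_def by auto
  qed
  then obtain PM where PM: "\<And>n. Fle (fst (PM n)) (snd (PM n))"
     "\<And>n. snd (PM n) + q (fst (PM n)) < m + 1 / real (Suc n)" by metis
  define P where "P n = fst (PM n)" for n
  define MM where "MM n = snd (PM n)" for n
  have PF: "Fle (P n) (MM n)" for n using PM(1) by (simp add: P_def MM_def)
  have Pg: "MM n + q (P n) < m + 1 / real (Suc n)" for n using PM(2) by (simp add: P_def MM_def)
  have close: "inner (P n - P k) (P n - P k) / 8 < (1 / real (Suc n) + 1 / real (Suc k)) / 2" for n k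
  proof -
    have "Fle ((1 - 1/2) *\<^sub>R P n + (1/2) *\<^sub>R P k) ((1-1/2) * MM n + (1/2) * MM k)"
      by (rule conv[OF PF PF]) auto
    hence "m \<le> ((1-1/2) * MM n + (1/2) * MM k) + q ((1 - 1/2) *\<^sub>R P n + (1/2) *\<^sub>R P k)"
      by (rule m_le)
    moreover have "q ((1 - 1/2) *\<^sub>R P n + (1/2) *\<^sub>R P k) = (q (P n) + q (P k)) / 2 - inner (P n - P k) (P n - P k) / 8"
      by (simp add: q_def inner_add_left inner_add_right inner_diff_left inner_diff_right inner_commute algebra_simps) (simp add: field_simps)
    ultimately have h: "m \<le> MM n / 2 + MM k / 2 + ((q (P n) + q (P k)) / 2 - inner (P n - P k) (P n - P k) / 8)"
      by simp
    have aux: "\<And>m A B C D d e1 e2::real. m \<le> A/2 + B/2 + ((C + D)/2 - d/8) \<Longrightarrow> A + C < m + e1 \<Longrightarrow> B + D < m + e2 \<Longrightarrow> d/8 < (e1+e2)/2"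
      by (simp add: field_simps)
    show ?thesis by (rule aux[OF h Pg[of n] Pg[of k]])
  qed
  have "Cauchy P"
  proof (rule metric_CauchyI)
    fix e :: real assume e: "e > 0"
    obtain N where N: "inverse (real (Suc N)) < e^2 / 8" using reals_Archimedean e
      by (metis zero_less_divide_iff zero_less_numeral zero_less_power)
    show "\<exists>N. \<forall>n\<ge>N. \<forall>k\<ge>N. dist (P n) (P k) < e"
    proof (intro exI allI impI)
      fix n k assume n: "n \<ge> N" and k: "k \<ge> N"
      have "1 / real (Suc n) \<le> 1 / real (Suc N)" using n by (simp add: frac_le)
      moreover have "1 / real (Suc k) \<le> 1 / real (Suc N)" using k by (simp add: frac_le)
      ultimately have "inner (P n - P k) (P n - P k) / 8 < e^2/8"
        using close[of n k] N by (simp add: inverse_eq_divide)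
      hence "(dist (P n) (P k))^2 < e^2" by (simp add: dist_norm power2_norm_eq_inner)
      thus "dist (P n) (P k) < e" using e by (simp add: power_less_imp_less_base)
    qed
  qed
  then obtain ps where lim: "P \<longlonglongrightarrow> ps" using Cauchy_convergent_iff convergent_def by blast
  define Ms where "Ms = m - q ps"
  have Fs: "Fle ps Ms" unfolding Fle_def
  proof
    fix yv assume yv: "yv \<in> G"
    have le: "tm yv (P n) \<le> m + 1 / real (Suc n) - q (P n)" for n
      using PF[of n] yv Pg[of n] unfolding Fle_def by force
    have t1: "(\<lambda>n. tm yv (P n)) \<longlonglongrightarrow> tm yv ps"
      unfolding tm_def by (intro tendsto_intros lim)
    have "(\<lambda>n. 1 / real (Suc n)) \<longlonglongrightarrow> 0"
      using LIMSEQ_inverse_real_of_nat by (simp add: inverse_eq_divide)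
    hence t2: "(\<lambda>n. m + 1 / real (Suc n) - q (P n)) \<longlonglongrightarrow> m + 0 - q ps"
      unfolding q_def by (intro tendsto_intros lim) auto
    have "tm yv ps \<le> m + 0 - q ps"
      by (rule LIMSEQ_le[OF t1 t2]) (use le in auto)
    thus "tm yv ps \<le> Ms" by (simp add: Ms_def)
  qed
  define x0 where "x0 = fst ps"
  define u0 where "u0 = snd ps"
  have ps: "ps = (x0,u0)" by (simp add: x0_def u0_def)
  have Mlow: "inner x0 u0 \<le> Ms" using lowb[OF Fs] by (simp add: ps)
  have FO: "Ms \<le> inner y v + inner x0 (y - x0) + inner u0 (v - u0)" if yv: "(y,v) \<in> G" for y v
  proof -
    define e where "e = (y,v)"
    define a where "a = inner y v - Ms + inner ps (e - ps)"
    define b where "b = inner (e - ps) (e - ps) / 2"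
    have "0 \<le> a + t * b" if t: "0 < t" "t \<le> 1" for t
    proof -
      have "Fle ((1-t) *\<^sub>R ps + t *\<^sub>R e) ((1-t)*Ms + t*inner y v)"
        by (rule conv[OF Fs graph[OF yv, folded e_def]]) (use t in auto)
      hence "m \<le> (1-t)*Ms + t*inner y v + q ((1-t) *\<^sub>R ps + t *\<^sub>R e)" by (rule m_le)
      moreover have "q ((1-t) *\<^sub>R ps + t *\<^sub>R e) = q ps + t * inner ps (e - ps) + t^2 * b"
        by (simp add: q_def b_def inner_add_left inner_add_right inner_diff_left inner_diff_right
            inner_commute algebra_simps power2_eq_square) (simp add: field_simps)
      ultimately have "0 \<le> t * (a + t * b)"
        by (simp add: Ms_def a_def algebra_simps power2_eq_square)
      thus ?thesis using t by (simp add: zero_le_mult_iff)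
    qed
    hence "0 \<le> a" by (rule small_t_lemma)
    thus ?thesis by (simp add: a_def e_def ps inner_diff_right)
  qed
  have G1: "(-u0, -x0) \<in> G"
  proof (rule maxi)
    fix y v assume yv: "(y,v) \<in> G"
    have sq: "0 \<le> inner (x0+u0) (x0+u0)" by simp
    show "0 \<le> inner (- u0 - y) (- x0 - v)"
      using FO[OF yv] Mlow sq
      by (simp add: inner_add_left inner_add_right inner_diff_left inner_diff_right inner_commute algebra_simps)
  qed
  have "Ms \<le> inner (-u0) (-x0) + inner x0 (-u0 - x0) + inner u0 (-x0 - u0)" by (rule FO[OF G1])
  hence "inner (x0+u0) (x0+u0) \<le> 0" using Mlow
    by (simp add: inner_add_left inner_add_right inner_diff_left inner_diff_right inner_commute algebra_simps)
  hence "x0 + u0 = 0" using inner_gt_zero_iff[of "x0+u0"] by linarith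
  hence "u0 = -x0" by (metis add.commute add_eq_0_iff)
  hence "(x0, -x0) \<in> G" using G1 by simp
  thus ?thesis by blast
qed


lemma resolvent_prop:
  fixes B :: "'a::{real_inner,complete_space} \<Rightarrow> 'a set"
  assumes mm: "maximal_monotone B" and a: "\<alpha> > 0"
  shows "\<exists>b\<in>B (resolvent \<alpha> B z). z - resolvent \<alpha> B z = \<alpha> *\<^sub>R b"
proof -
  have mo: "\<And>x y u v. u \<in> B x \<Longrightarrow> v \<in> B y \<Longrightarrow> inner (u - v) (x - y) \<ge> 0"
    using mm unfolding maximal_monotone_def monotone_op_def by blast
  have mx: "\<And>x u. (\<And>y v. v \<in> B y \<Longrightarrow> inner (u - v) (x - y) \<ge> 0) \<Longrightarrow> u \<in> B x"
    using mm unfolding maximal_monotone_def by blast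
  define G where "G = {(x - z, \<alpha> *\<^sub>R b) | x b. b \<in> B x}"
  have "\<exists>x. (x, -x) \<in> G"
  proof (rule minty_core)
    fix x u y v assume "(x,u) \<in> G" "(y,v) \<in> G"
    then obtain x' b y' b' where e: "x = x' - z" "u = \<alpha> *\<^sub>R b" "b \<in> B x'"
       "y = y' - z" "v = \<alpha> *\<^sub>R b'" "b' \<in> B y'" unfolding G_def by blast
    have "inner (b - b') (x' - y') \<ge> 0" using mo[OF e(3) e(6)] .
    hence "0 \<le> \<alpha> * inner (b - b') (x' - y')" using a by simp
    also have "\<alpha> * inner (b - b') (x' - y') = inner (x - y) (u - v)"
      by (simp add: e inner_commute scaleR_diff_right[symmetric])
    finally show "inner (x - y) (u - v) \<ge> 0" .
  next
    fix x u assume h: "\<And>y v. (y,v) \<in> G \<Longrightarrow> inner (x - y) (u - v) \<ge> 0"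
    have "(1/\<alpha>) *\<^sub>R u \<in> B (x + z)"
    proof (rule mx)
      fix y v assume v: "v \<in> B y"
      have "(y - z, \<alpha> *\<^sub>R v) \<in> G" unfolding G_def using v by blast
      hence "0 \<le> inner (x - (y - z)) (u - \<alpha> *\<^sub>R v)" by (rule h)
      also have "u - \<alpha> *\<^sub>R v = \<alpha> *\<^sub>R ((1/\<alpha>) *\<^sub>R u - v)" using a by (simp add: algebra_simps)
      finally have "0 \<le> inner (x - (y - z)) (\<alpha> *\<^sub>R ((1/\<alpha>) *\<^sub>R u - v))" .
      moreover have "x - (y - z) = x + z - y" by simp
      ultimately have "0 \<le> \<alpha> * inner (x + z - y) ((1/\<alpha>) *\<^sub>R u - v)"
        by (simp only: inner_scaleR_right)
      hence "0 \<le> \<alpha> * inner ((1/\<alpha>) *\<^sub>R u - v) (x + z - y)"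
        by (simp only: inner_commute)
      thus "0 \<le> inner ((1/\<alpha>) *\<^sub>R u - v) (x + z - y)" using a by (simp add: zero_le_mult_iff)
    qed
    moreover have "x = (x + z) - z" "u = \<alpha> *\<^sub>R ((1/\<alpha>) *\<^sub>R u)" using a by auto
    ultimately show "(x,u) \<in> G" unfolding G_def by blast
  qed
  then obtain x where "(x, -x) \<in> G" by blast
  then obtain p b where pb: "x = p - z" "-x = \<alpha> *\<^sub>R b" "b \<in> B p" unfolding G_def by blast
  define P where "P p \<longleftrightarrow> z - p \<in> (\<lambda>v. \<alpha> *\<^sub>R v) ` B p" for p
  have Pp: "P p" unfolding P_def using pb by (auto intro!: image_eqI[of _ _ b])
  have uniq: "q = p" if "P q" for q
  proof -
    obtain c where c: "c \<in> B q" "z - q = \<alpha> *\<^sub>R c" using \<open>P q\<close> unfolding P_def by blast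
    have "inner (c - b) (q - p) \<ge> 0" using mo[OF c(1) pb(3)] .
    moreover have "c - b = (1/\<alpha>) *\<^sub>R (p - q)"
    proof -
      have zp: "z - p = \<alpha> *\<^sub>R b" using pb(1,2) by (metis minus_diff_eq)
      have "\<alpha> *\<^sub>R (c - b) = (z - q) - (z - p)" using c(2) zp by (simp add: scaleR_diff_right)
      also have "\<dots> = p - q" by simp
      finally have "\<alpha> *\<^sub>R (c - b) = p - q" .
      hence "(1/\<alpha>) *\<^sub>R (\<alpha> *\<^sub>R (c - b)) = (1/\<alpha>) *\<^sub>R (p - q)" by simp
      thus ?thesis using a by simp
    qed
    ultimately have "0 \<le> (1/\<alpha>) * inner (p - q) (q - p)" by simp
    hence "0 \<le> inner (p - q) (q - p)" using a by (simp add: zero_le_divide_iff)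
    hence "inner (q - p) (q - p) \<le> 0"
      by (metis inner_minus_left minus_diff_eq neg_0_le_iff_le)
    hence "q - p = 0" using inner_gt_zero_iff[of "q - p"] by linarith
    thus "q = p" by simp
  qed
  have ex1: "\<exists>!p. P p" using Pp uniq by blast
  have "resolvent \<alpha> B z = (THE p. P p)" unfolding resolvent_def P_def by simp
  hence "P (resolvent \<alpha> B z)" using theI'[OF ex1] by simp
  thus ?thesis unfolding P_def by auto
qed

lemma proj_halfspace_fixed:
  fixes w c x :: "'a::real_inner" and r :: real
  assumes r: "r \<ge> 0" and fx: "proj {y. inner w (y - c) \<le> r} x = x"
  shows "inner w (x - c) \<le> r"
proof (rule ccontr)
  assume nx: "\<not> inner w (x - c) \<le> r"
  define T where "T = {y. inner w (y - c) \<le> r}"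
  define s where "s = (inner w (x - c) - r) / inner w w"
  have w0: "w \<noteq> 0" using nx r by auto
  have ww: "inner w w > 0" using w0 by simp
  have s0: "s > 0" using nx ww by (simp add: s_def)
  define p where "p = x - s *\<^sub>R w"
  have i1: "inner w (p - c) = inner w (x - c) - s * inner w w"
    by (simp add: p_def inner_diff_right algebra_simps)
  have i2: "s * inner w w = inner w (x - c) - r" using ww by (simp add: s_def)
  have pT: "p \<in> T" unfolding T_def using i1 i2 by simp
  have xp: "norm (x - p) = s * norm w" using s0 by (simp add: p_def)
  have mini: "dist x p \<le> dist x y" if "y \<in> T" for y
  proof -
    have "inner w (x - y) = inner w (x - c) - inner w (y - c)" by (simp add: inner_diff_right)
    also have "\<dots> \<ge> inner w (x - c) - r" using that unfolding T_def by simp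
    finally have "s * inner w w \<le> inner w (x - y)" using ww by (simp add: s_def)
    also have "\<dots> \<le> norm w * norm (x - y)" by (rule norm_cauchy_schwarz)
    finally have "s * (norm w * norm w) \<le> norm w * norm (x - y)"
      by (simp add: power2_norm_eq_inner[symmetric] power2_eq_square)
    hence "s * norm w \<le> norm (x - y)" using w0 by (simp add: mult.commute mult.left_commute)
    thus ?thesis using xp by (simp add: dist_norm)
  qed
  have uniq: "q = p" if q: "q \<in> T" "\<forall>y\<in>T. dist x q \<le> dist x y" for q
  proof -
    have e: "dist x q = dist x p" using q mini pT by (meson antisym)
    have mT: "(1/2) *\<^sub>R (p + q) \<in> T" using pT q(1) unfolding T_def
      by (simp add: inner_diff_right inner_add_right algebra_simps)
    have "dist x q \<le> dist x ((1/2) *\<^sub>R (p + q))" using q(2) mT by blast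
    hence "(norm (x - q))^2 \<le> (norm (x - (1/2) *\<^sub>R (p + q)))^2"
      unfolding dist_norm by (rule power_mono) simp
    moreover have "(norm (x - (1/2) *\<^sub>R (p + q)))^2 = ((norm (x - p))^2 + (norm (x - q))^2)/2 - (norm (p - q))^2/4"
      by (simp add: power2_norm_eq_inner inner_diff_left inner_diff_right inner_add_left inner_add_right
          inner_commute algebra_simps) (simp add: field_simps)
    moreover have "norm (x - p) = norm (x - q)" using e by (simp add: dist_norm)
    ultimately have "(norm (p - q))^2 \<le> 0" by simp
    thus ?thesis by simp
  qed
  have "proj T x = p" unfolding proj_def
  proof (rule the_equality)
    show "p \<in> T \<and> (\<forall>y\<in>T. dist x p \<le> dist x y)" using pT mini by blast
  next
    fix q assume "q \<in> T \<and> (\<forall>y\<in>T. dist x q \<le> dist x y)"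
    thus "q = p" using uniq by blast
  qed
  hence "x = p" using fx by (simp add: T_def)
  thus False using pT nx by (simp add: T_def)
qed

lemma ucont_large:
  fixes f :: "'a::real_normed_vector \<Rightarrow> 'b::real_normed_vector"
  assumes uc: "uniformly_continuous_on UNIV f" and eta: "\<eta> > 0"
  shows "\<exists>K>0. \<forall>p q. norm (p - q) \<ge> \<eta> \<longrightarrow> norm (f p - f q) \<le> K * norm (p - q)"
proof -
  obtain e where e: "e > 0" "\<And>p q. dist p q < e \<Longrightarrow> dist (f p) (f q) < 1"
    using uc unfolding uniformly_continuous_on_def by (metis UNIV_I zero_less_one)
  have chain: "\<forall>p q. norm (p - q) < real (Suc n) * e \<longrightarrow> norm (f p - f q) \<le> real (Suc n)" for n
  proof (induction n)
    case 0
    show ?case using e(2) by (simp add: dist_norm less_imp_le)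
  next
    case (Suc n)
    show ?case
    proof (intro allI impI)
      fix p q :: 'a assume pq: "norm (p - q) < real (Suc (Suc n)) * e"
      define r where "r = q + (real (Suc n) / real (Suc (Suc n))) *\<^sub>R (p - q)"
      have "norm (r - q) = (real (Suc n) / real (Suc (Suc n))) * norm (p - q)" by (simp add: r_def)
      also have "\<dots> < (real (Suc n) / real (Suc (Suc n))) * (real (Suc (Suc n)) * e)"
        using pq by (intro mult_strict_left_mono) auto
      also have "\<dots> = real (Suc n) * e" by simp
      finally have 1: "norm (f r - f q) \<le> real (Suc n)" using Suc by blast
      have "p - r = (1 - real (Suc n) / real (Suc (Suc n))) *\<^sub>R (p - q)" by (simp add: r_def algebra_simps)
      also have "1 - real (Suc n) / real (Suc (Suc n)) = 1 / real (Suc (Suc n))" by (simp add: field_simps)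
      finally have "norm (p - r) = norm (p - q) / real (Suc (Suc n))" by simp
      also have "\<dots> < e" using pq by (simp add: field_simps)
      finally have 2: "norm (f p - f r) \<le> 1" using e(2)[of p r] by (simp add: dist_norm)
      have "norm (f p - f q) \<le> norm (f p - f r) + norm (f r - f q)"
        using norm_triangle_ineq[of "f p - f r" "f r - f q"] by simp
      thus "norm (f p - f q) \<le> real (Suc (Suc n))" using 1 2 by simp
    qed
  qed
  define K where "K = 1/e + 1/\<eta>"
  have K0: "K > 0" unfolding K_def using e(1) eta by (intro add_pos_pos divide_pos_pos) auto
  have "norm (f p - f q) \<le> K * norm (p - q)" if h: "norm (p - q) \<ge> \<eta>" for p q
  proof -
    define n where "n = nat \<lfloor>norm (p - q) / e\<rfloor>"
    have fl: "real n \<le> norm (p - q) / e" "norm (p - q) / e < real n + 1"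
      unfolding n_def using e(1) by (simp_all add: of_nat_nat floor_less_iff)
    have "norm (p - q) < real (Suc n) * e" using fl(2) e(1) by (simp add: field_simps)
    hence "norm (f p - f q) \<le> real (Suc n)" using chain by blast
    also have "\<dots> \<le> norm (p - q) / e + 1" using fl(1) by simp
    also have "1 \<le> norm (p - q) / \<eta>" using h eta by simp
    hence "norm (p - q) / e + 1 \<le> norm (p - q) / e + norm (p - q) / \<eta>" by simp
    also have "\<dots> = K * norm (p - q)" using e(1) eta by (simp add: K_def field_simps)
    finally show ?thesis .
  qed
  thus ?thesis using K0 by blast
qed

lemma ratio_mono_real:
  fixes s t a a' :: real
  assumes "s \<ge> 0" "t \<ge> 0" "0 < a" "a \<le> a'"
    and h: "s^2/a + t^2/a' \<le> (1/a + 1/a') * (s * t)"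
  shows "t / a' \<le> s / a"
proof -
  have "a' * s^2 + a * t^2 \<le> (a + a') * (s * t)"
  proof -
    have "a * a' * (s^2/a + t^2/a') \<le> a * a' * ((1/a + 1/a') * (s * t))"
      using h assms by (intro mult_left_mono) auto
    moreover have "a * a' * (s^2/a + t^2/a') = a' * s^2 + a * t^2" using assms by (simp add: field_simps)
    moreover have "a * a' * ((1/a + 1/a') * (s * t)) = (a + a') * (s * t)" using assms by (simp add: field_simps)
    ultimately show ?thesis by simp
  qed
  hence key: "(t - s) * (a' * s - a * t) \<ge> 0" by (simp add: algebra_simps power2_eq_square)
  show ?thesis
  proof (rule ccontr)
    assume "\<not> t / a' \<le> s / a"
    hence lt: "a' * s < a * t" using assms by (simp add: field_simps)
    have "a * s \<le> a' * s" using assms by (intro mult_right_mono) auto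
    hence "a * s < a * t" using lt by simp
    hence "s < t" using assms by simp
    hence "(t - s) * (a' * s - a * t) < 0" using lt by (intro mult_pos_neg) auto
    thus False using key by simp
  qed
qed


lemma method1_iter_Suc:
  "method1_iter A1 A2 B \<theta> \<delta> \<delta>bar x0 a k' = p \<Longrightarrow>
   method1_iter A1 A2 B \<theta> \<delta> \<delta>bar x0 a (Suc k') = method1_step A1 A2 B \<theta> \<delta> \<delta>bar p"
  by (simp add: method1_iter_def)

lemma alpha_pos:
  assumes "0 < \<theta>" "0 < a"
  shows "snd (method1_iter A1 A2 B \<theta> \<delta> \<delta>bar x0 a k') > 0"
proof (induction k')
  case 0 thus ?case using assms by (simp add: method1_iter_def)
next
  case (Suc k')
  have "snd (method1_iter A1 A2 B \<theta> \<delta> \<delta>bar x0 a (Suc k'))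
      = snd (method1_iter A1 A2 B \<theta> \<delta> \<delta>bar x0 a k') * \<theta> ^ ls_index A1 A2 B \<theta> \<delta>
          (snd (method1_iter A1 A2 B \<theta> \<delta> \<delta>bar x0 a k')) (fst (method1_iter A1 A2 B \<theta> \<delta> \<delta>bar x0 a k'))"
    by (simp add: method1_iter_Suc[OF refl] method1_step_def Let_def)
  thus ?case using Suc assms by simp
qed

theorem proposition4p6:
  fixes A1 A2 :: "'a::{real_inner, complete_space} \<Rightarrow> 'a"
    and B :: "'a \<Rightarrow> 'a set"
    and \<beta> \<theta> \<delta> \<delta>bar \<alpha>m1 :: real and x0 :: 'a and k :: nat
  assumes "\<beta> > 0" and "cocoercive \<beta> A1"
    and "maximal_monotone (\<lambda>x. {A2 x})" and "uniformly_continuous_on UNIV A2"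
    and "maximal_monotone B"
    and "\<exists>z. 0 \<in> (\<lambda>b. A1 z + A2 z + b) ` B z"
    and "0 < \<theta>" "\<theta> < 1" "0 < \<delta>" "\<delta> < 1" "\<delta>bar > 0" "1 - \<delta> - \<delta>bar > 0"
    and "\<alpha>m1 > 0" "\<alpha>m1 \<le> 4 * \<beta> * \<delta>bar"
    and "fst (method1_iter A1 A2 B \<theta> \<delta> \<delta>bar x0 \<alpha>m1 (Suc k))
           = fst (method1_iter A1 A2 B \<theta> \<delta> \<delta>bar x0 \<alpha>m1 k)"
  shows "0 \<in> (\<lambda>b. A1 (fst (method1_iter A1 A2 B \<theta> \<delta> \<delta>bar x0 \<alpha>m1 k))
                 + A2 (fst (method1_iter A1 A2 B \<theta> \<delta> \<delta>bar x0 \<alpha>m1 k)) + b)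
           ` B (fst (method1_iter A1 A2 B \<theta> \<delta> \<delta>bar x0 \<alpha>m1 k))"
proof -
  note uc = assms(4) and mmB = assms(5) and th0 = assms(7) and th1 = assms(8)
    and de0 = assms(9) and db0 = assms(11) and dd = assms(12)
  define p where "p = method1_iter A1 A2 B \<theta> \<delta> \<delta>bar x0 \<alpha>m1 k"
  define x where "x = fst p"
  define a0 where "a0 = snd p"
  have a0: "a0 > 0" unfolding a0_def p_def using alpha_pos th0 assms(13) by blast
  have pe: "p = (x, a0)" by (simp add: x_def a0_def)
  have fixpt: "fst (method1_step A1 A2 B \<theta> \<delta> \<delta>bar (x, a0)) = x"
    using assms(15) method1_iter_Suc[OF p_def[symmetric]] pe by (simp add: x_def p_def)
  have monoB: "\<And>x y u v. u \<in> B x \<Longrightarrow> v \<in> B y \<Longrightarrow> inner (u - v) (x - y) \<ge> 0"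
    using mmB unfolding maximal_monotone_def monotone_op_def by blast
  have goal: "0 \<in> (\<lambda>b. A1 x + A2 x + b) ` B x"
  proof (rule ccontr)
    assume nz: "0 \<notin> (\<lambda>b. A1 x + A2 x + b) ` B x"
    define u where "u = A1 x + A2 x"
    define xb where "xb a = fb_point A1 A2 B a x" for a
    define d where "d a = x - xb a" for a
    have rp: "\<exists>b\<in>B (xb a). d a - a *\<^sub>R u = a *\<^sub>R b" if ap: "a > 0" for a
    proof -
      obtain b where b: "b \<in> B (xb a)" "(x - a *\<^sub>R u) - xb a = a *\<^sub>R b"
        using resolvent_prop[OF mmB ap, of "x - a *\<^sub>R u"]
        unfolding xb_def fb_point_def u_def by blast
      have "d a - a *\<^sub>R u = a *\<^sub>R b" using b(2) by (simp add: d_def algebra_simps)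
      thus ?thesis using b(1) by blast
    qed
    have bform: "b = (1/a) *\<^sub>R d a - u" if "a > 0" "d a - a *\<^sub>R u = a *\<^sub>R b" for a b
    proof -
      have "(1/a) *\<^sub>R (d a - a *\<^sub>R u) = (1/a) *\<^sub>R (a *\<^sub>R b)" using that(2) by simp
      thus ?thesis using that(1) by (simp add: scaleR_diff_right)
    qed
    have dne: "d a \<noteq> 0" if ap: "a > 0" for a
    proof
      assume d0: "d a = 0"
      obtain b where b: "b \<in> B (xb a)" "d a - a *\<^sub>R u = a *\<^sub>R b" using rp[OF ap] by blast
      have "b = - u" using bform[OF ap b(2)] d0 by simp
      moreover have "xb a = x" using d0 by (simp add: d_def)
      ultimately have "0 \<in> (\<lambda>b. A1 x + A2 x + b) ` B x" using b(1) unfolding u_def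
        by (auto intro!: image_eqI[of _ _ b])
      thus False using nz by simp
    qed
    have ratio: "norm (d a') / a' \<le> norm (d a) / a" if aa: "0 < a" "a \<le> a'" for a a'
    proof -
      have a': "0 < a'" using aa by simp
      obtain b where b: "b \<in> B (xb a)" "d a - a *\<^sub>R u = a *\<^sub>R b" using rp[OF aa(1)] by blast
      obtain b' where b': "b' \<in> B (xb a')" "d a' - a' *\<^sub>R u = a' *\<^sub>R b'" using rp[OF a'] by blast
      have "0 \<le> inner (b - b') (xb a - xb a')" by (rule monoB[OF b(1) b'(1)])
      also have "b - b' = (1/a) *\<^sub>R d a - (1/a') *\<^sub>R d a'"
        using bform[OF aa(1) b(2)] bform[OF a' b'(2)] by simp
      also have "xb a - xb a' = d a' - d a" by (simp add: d_def)
      finally have "0 \<le> inner ((1/a) *\<^sub>R d a - (1/a') *\<^sub>R d a') (d a' - d a)" .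
      hence "(norm (d a))^2/a + (norm (d a'))^2/a' \<le> (1/a + 1/a') * inner (d a) (d a')"
        by (simp add: inner_diff_left inner_diff_right power2_norm_eq_inner inner_commute algebra_simps)
      also have "\<dots> \<le> (1/a + 1/a') * (norm (d a) * norm (d a'))"
        using aa a' by (intro mult_left_mono norm_cauchy_schwarz) auto
      finally show ?thesis by (rule ratio_mono_real[OF norm_ge_zero norm_ge_zero aa])
    qed
    define c where "c = norm (d a0) / a0"
    have c0: "c > 0" unfolding c_def using dne[OF a0] a0 by simp
    define aj where "aj j = a0 * \<theta> ^ j" for j :: nat
    have ajpos: "aj j > 0" for j using a0 th0 by (simp add: aj_def)
    have ajle: "aj j \<le> a0" for j
    proof -
      have "\<theta> ^ j \<le> 1" using th0 th1 by (simp add: power_le_one)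
      thus ?thesis using a0 by (simp add: aj_def mult_left_le)
    qed
    have cj: "c * aj j \<le> norm (d (aj j))" for j
    proof -
      have "norm (d (aj j)) / aj j \<ge> c" unfolding c_def using ratio[OF ajpos ajle] by simp
      thus ?thesis using ajpos[of j] by (simp add: field_simps)
    qed
    define Cond where "Cond j \<longleftrightarrow> aj j * inner (A2 x - A2 (xb (aj j))) (d (aj j)) \<le> \<delta> * (norm (d (aj j)))^2"
      for j :: nat
    have ls: "ls_index A1 A2 B \<theta> \<delta> a0 x = (LEAST j. Cond j)"
      unfolding ls_index_def Cond_def aj_def xb_def d_def by simp
    have exj: "\<exists>j. Cond j"
    proof -
      obtain \<eta> where eta: "\<eta> > 0" "\<And>p q. dist p q < \<eta> \<Longrightarrow> dist (A2 p) (A2 q) < \<delta> * c"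
        using uc unfolding uniformly_continuous_on_def using de0 c0
        by (metis UNIV_I mult_pos_pos)
      obtain K where K: "K > 0" "\<And>p q. norm (p - q) \<ge> \<eta> \<Longrightarrow> norm (A2 p - A2 q) \<le> K * norm (p - q)"
        using ucont_large[OF uc eta(1)] by blast
      obtain j where j: "\<theta> ^ j < \<delta> / (K * a0)"
        using real_arch_pow_inv[of "\<delta> / (K * a0)" \<theta>] de0 K a0 th1 by auto
      define a where "a = aj j"
      define D where "D = d a"
      define n where "n = norm (A2 x - A2 (xb a))"
      have apos: "a > 0" using ajpos by (simp add: a_def)
      have aK: "a * K \<le> \<delta>"
      proof -
        have "a = a0 * \<theta> ^ j" by (simp add: a_def aj_def)
        also have "\<dots> \<le> a0 * (\<delta> / (K * a0))" using j a0 by (intro mult_left_mono) auto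
        also have "\<dots> = \<delta> / K" using a0 by simp
        finally show ?thesis using K(1) by (simp add: field_simps)
      qed
      have main: "a * n \<le> \<delta> * norm D"
      proof (cases "norm D < \<eta>")
        case True
        hence "dist x (xb a) < \<eta>" by (simp add: D_def d_def dist_norm)
        hence "n < \<delta> * c" using eta(2) by (simp add: n_def dist_norm)
        hence "a * n \<le> a * (\<delta> * c)" using apos by simp
        also have "\<dots> = \<delta> * (c * a)" by simp
        also have "\<dots> \<le> \<delta> * norm D" using cj[of j] de0 by (simp add: a_def D_def)
        finally show ?thesis .
      next
        case False
        hence "n \<le> K * norm D" using K(2)[of x "xb a"] by (simp add: n_def D_def d_def)
        hence "a * n \<le> a * (K * norm D)" using apos by simp
        also have "\<dots> = (a * K) * norm D" by simp
        also have "\<dots> \<le> \<delta> * norm D" using aK by (simp add: mult_right_mono)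
        finally show ?thesis .
      qed
      have "a * inner (A2 x - A2 (xb a)) D \<le> a * (n * norm D)"
        using apos norm_cauchy_schwarz[of "A2 x - A2 (xb a)" D] by (simp add: n_def)
      also have "\<dots> = (a * n) * norm D" by simp
      also have "\<dots> \<le> (\<delta> * norm D) * norm D" using main by (simp add: mult_right_mono)
      finally have "Cond j" unfolding Cond_def by (simp add: a_def D_def power2_eq_square)
      thus ?thesis by blast
    qed
    define J where "J = ls_index A1 A2 B \<theta> \<delta> a0 x"
    have CJ: "Cond J" unfolding J_def ls using exj by (rule LeastI_ex)
    define \<alpha> where "\<alpha> = aj J"
    have al: "\<alpha> > 0" using ajpos by (simp add: \<alpha>_def)
    have step: "fst (method1_step A1 A2 B \<theta> \<delta> \<delta>bar (x, a0)) =
      proj {y. inner ((1 / \<alpha>) *\<^sub>R d \<alpha> - (A2 x - A2 (xb \<alpha>))) (y - xb \<alpha>) \<le> (\<delta>bar / \<alpha>) * (norm (d \<alpha>))^2} x"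
      unfolding method1_step_def Let_def \<alpha>_def aj_def J_def d_def xb_def by simp
    have "inner ((1 / \<alpha>) *\<^sub>R d \<alpha> - (A2 x - A2 (xb \<alpha>))) (x - xb \<alpha>) \<le> (\<delta>bar / \<alpha>) * (norm (d \<alpha>))^2"
      by (rule proj_halfspace_fixed) (use db0 al fixpt step in auto)
    hence h1: "(1/\<alpha>) * (norm (d \<alpha>))^2 - inner (A2 x - A2 (xb \<alpha>)) (d \<alpha>) \<le> (\<delta>bar / \<alpha>) * (norm (d \<alpha>))^2"
      by (simp add: d_def[symmetric] inner_diff_left power2_norm_eq_inner)
    have h2: "\<alpha> * inner (A2 x - A2 (xb \<alpha>)) (d \<alpha>) \<le> \<delta> * (norm (d \<alpha>))^2"
      using CJ unfolding Cond_def \<alpha>_def .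
    have "\<alpha> * ((1/\<alpha>) * (norm (d \<alpha>))^2 - inner (A2 x - A2 (xb \<alpha>)) (d \<alpha>)) \<le> \<alpha> * ((\<delta>bar / \<alpha>) * (norm (d \<alpha>))^2)"
      using h1 al by (intro mult_left_mono) auto
    hence "(norm (d \<alpha>))^2 - \<alpha> * inner (A2 x - A2 (xb \<alpha>)) (d \<alpha>) \<le> \<delta>bar * (norm (d \<alpha>))^2"
      using al by (simp add: algebra_simps)
    hence "(1 - \<delta> - \<delta>bar) * (norm (d \<alpha>))^2 \<le> 0" using h2 by (simp add: algebra_simps)
    hence "(norm (d \<alpha>))^2 \<le> 0" using dd by (simp add: mult_le_0_iff)
    hence "d \<alpha> = 0" by simp
    thus False using dne[OF al] by simp
  qed
  thus ?thesis by (simp add: x_def p_def)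
qed

end
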